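(* Probabilistic circuits and diagonal positive unital circuits over a given partition circuit are isomorphic, in the sense that: (i) for every diagonal positive unital circuit there is a probabilistic circuit over the same partition circuit with $P_k(\mathbf{x}_k)=\operatorname{diagvec}(O_k(\mathbf{x}_k))$ for every unit $k$ and every assignment $\mathbf{x}_k$; and (ii) conversely, for every probabilistic circuit there is a diagonal positive unital circuit over the same partition circuit with $\operatorname{diagvec}(O_k(\mathbf{x}_k))=P_k(\mathbf{x}_k)$ for every unit $k$ and every $\mathbf{x}_k$. Here $\operatorname{diagvec}(A)$ is the vector of diagonal entries of $A$.
   Context: A partition circuit over discrete variables $\mathbf{x}=\{x_0,\dots,x_{N-1}\}$ is a rooted binary tree whose leaves are in bijection with the variables (leaf $k$ carries $x_k$ with finite value set $\Omega(X_k)$), each internal unit $k$ having two children $k_l,k_r$; $\mathbf{x}_k$ denotes an assignment to the variables at leaves below $k$. Probabilistic circuit: to each leaf $k$ real vectors $P_{x_k}$ with nonnegative entries and $\sum_{x_k}P_{x_k}=(1,\dots,1)^T$, $P_k(\mathbf{x}_k)=P_{x_k}$; to each internal unit $k$ a real nonnegative row-stochastic matrix $W_k$ (rows sum to 1), $P_k(\mathbf{x}_k)=W_k(P_{k_l}(\mathbf{x}_{k_l})\otimes P_{k_r}(\mathbf{x}_{k_r}))$, $\otimes$ Kronecker product. Diagonal positive unital circuit: to each leaf $k$ diagonal complex matrices $\Delta_{x_k}$ with $\sum_{x_k}\Delta_{x_k}\Delta_{x_k}^*=\mathbb{1}$, $O_k(\mathbf{x}_k)=\Delta_{x_k}\Delta_{x_k}^*$;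 to each internal unit $k$ with input size $n$ (size of $O_{k_l}\otimes O_{k_r}$) and output size $m$, diagonal $n\times n$ matrices $D_{kj}$ ($j=1,\dots,m$) with $\operatorname{Tr}[D_{kj}D_{kj}^*]=1$, and $O_k(\mathbf{x}_k)=\sum_{j=1}^mJ_jD_{kj}(O_{k_l}(\mathbf{x}_{k_l})\otimes O_{k_r}(\mathbf{x}_{k_r}))D_{kj}^*J_j^*$, where $J_j$ is the $m\times n$ matrix whose $j$-th row is all ones and other entries zero. *)

theory Defs
  imports Complex_Main "Jordan_Normal_Form.Matrix"
begin

datatype ptree = PLeaf nat | PNode ptree ptree

fun leaf_vars :: "ptree \<Rightarrow> nat list" where
  "leaf_vars (PLeaf k) = [k]"
| "leaf_vars (PNode l r) = leaf_vars l @ leaf_vars r"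

definition partition_circuit :: "nat \<Rightarrow> ptree \<Rightarrow> bool" where
  "partition_circuit N T \<longleftrightarrow> distinct (leaf_vars T) \<and> set (leaf_vars T) = {..<N}"

text \<open>Circuits over a partition circuit: the same tree, annotated with leaf data of
  type 'a and internal-unit data of type 'b.\<close>
datatype ('a, 'b) atree = ALeaf nat 'a | ANode 'b "('a, 'b) atree" "('a, 'b) atree"

fun shape :: "('a, 'b) atree \<Rightarrow> ptree" where
  "shape (ALeaf k a) = PLeaf k"
| "shape (ANode b l r) = PNode (shape l) (shape r)"

text \<open>Units of a partition circuit are identified by their path from the root
  (False = left child, True = right child).\<close>
fun units :: "ptree \<Rightarrow> bool list set" where
  "units (PLeaf k) = {[]}"
| "units (PNode l r) = insert [] ((Cons False) ` units l \<union> (Cons True) ` units r)"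

fun sub_at :: "('a, 'b) atree \<Rightarrow> bool list \<Rightarrow> ('a, 'b) atree" where
  "sub_at t [] = t"
| "sub_at (ANode b l r) (False # p) = sub_at l p"
| "sub_at (ANode b l r) (True # p) = sub_at r p"
| "sub_at (ALeaf k a) (d # p) = ALeaf k a"

abbreviation avars :: "('a, 'b) atree \<Rightarrow> nat set" where
  "avars t \<equiv> set (leaf_vars (shape t))"

definition kron_vec :: "'a::times vec \<Rightarrow> 'a vec \<Rightarrow> 'a vec" where
  "kron_vec u v = vec (dim_vec u * dim_vec v)
     (\<lambda>i. u $ (i div dim_vec v) * v $ (i mod dim_vec v))"

definition kron_mat :: "'a::times mat \<Rightarrow> 'a mat \<Rightarrow> 'a mat" where
  "kron_mat A B = mat (dim_row A * dim_row B) (dim_col A * dim_col B)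
     (\<lambda>(i, j). A $$ (i div dim_row B, j div dim_col B) * B $$ (i mod dim_row B, j mod dim_col B))"

definition ctrans :: "complex mat \<Rightarrow> complex mat" where
  "ctrans A = mat (dim_col A) (dim_row A) (\<lambda>(i, j). cnj (A $$ (j, i)))"

definition mtrace :: "'a::comm_monoid_add mat \<Rightarrow> 'a" where
  "mtrace A = (\<Sum>i<dim_row A. A $$ (i, i))"

definition vsum :: "nat \<Rightarrow> 's set \<Rightarrow> ('s \<Rightarrow> 'a::comm_monoid_add vec) \<Rightarrow> 'a vec" where
  "vsum d S f = vec d (\<lambda>i. \<Sum>s\<in>S. f s $ i)"

definition msum :: "nat \<Rightarrow> nat \<Rightarrow> 's set \<Rightarrow> ('s \<Rightarrow> 'a::comm_monoid_add mat) \<Rightarrow> 'a mat" where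
  "msum nr nc S f = mat nr nc (\<lambda>(i, j). \<Sum>s\<in>S. f s $$ (i, j))"

text \<open>J_j: the m x n matrix whose j-th row is all ones (0-based j).\<close>
definition Jmat :: "nat \<Rightarrow> nat \<Rightarrow> nat \<Rightarrow> complex mat" where
  "Jmat m n j = mat m n (\<lambda>(i, c). if i = j then 1 else 0)"

definition diagvec :: "'a mat \<Rightarrow> 'a vec" where
  "diagvec A = vec (dim_row A) (\<lambda>i. A $$ (i, i))"

text \<open>Leaf data: (dimension d, x \<mapsto> P_x); internal data: W_k.\<close>
type_synonym 'v prob_circuit = "(nat \<times> ('v \<Rightarrow> real vec), real mat) atree"

fun pdim :: "'v prob_circuit \<Rightarrow> nat" where
  "pdim (ALeaf k (d, P)) = d"
| "pdim (ANode W l r) = dim_row W"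

fun prob_circuit :: "(nat \<Rightarrow> 'v set) \<Rightarrow> 'v prob_circuit \<Rightarrow> bool" where
  "prob_circuit \<Omega> (ALeaf k (d, P)) \<longleftrightarrow>
     (\<forall>x\<in>\<Omega> k. P x \<in> carrier_vec d \<and> (\<forall>i<d. P x $ i \<ge> 0))
     \<and> vsum d (\<Omega> k) P = vec d (\<lambda>i. 1)"
| "prob_circuit \<Omega> (ANode W l r) \<longleftrightarrow>
     W \<in> carrier_mat (dim_row W) (pdim l * pdim r)
     \<and> (\<forall>i<dim_row W. \<forall>j<dim_col W. W $$ (i, j) \<ge> 0)
     \<and> (\<forall>i<dim_row W. (\<Sum>j<dim_col W. W $$ (i, j)) = 1)
     \<and> prob_circuit \<Omega> l \<and> prob_circuit \<Omega> r"

text \<open>P_k(x_k), evaluated at a (total) assignment x; only the variables below k matter.\<close>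
fun peval :: "'v prob_circuit \<Rightarrow> (nat \<Rightarrow> 'v) \<Rightarrow> real vec" where
  "peval (ALeaf k (d, P)) x = P (x k)"
| "peval (ANode W l r) x = W *\<^sub>v kron_vec (peval l x) (peval r x)"

text \<open>Leaf data: (dimension d, x \<mapsto> Delta_x); internal data: (output size m, j \<mapsto> D_kj),
  where j ranges over 0..m-1 (the paper's 1..m).\<close>
type_synonym 'v dpu_circuit = "(nat \<times> ('v \<Rightarrow> complex mat), nat \<times> (nat \<Rightarrow> complex mat)) atree"

fun ddim :: "'v dpu_circuit \<Rightarrow> nat" where
  "ddim (ALeaf k (d, \<Delta>)) = d"
| "ddim (ANode (m, D) l r) = m"

fun dpu_circuit :: "(nat \<Rightarrow> 'v set) \<Rightarrow> 'v dpu_circuit \<Rightarrow> bool" where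
  "dpu_circuit \<Omega> (ALeaf k (d, \<Delta>)) \<longleftrightarrow>
     (\<forall>x\<in>\<Omega> k. \<Delta> x \<in> carrier_mat d d \<and> diagonal_mat (\<Delta> x))
     \<and> msum d d (\<Omega> k) (\<lambda>x. \<Delta> x * ctrans (\<Delta> x)) = 1\<^sub>m d"
| "dpu_circuit \<Omega> (ANode (m, D) l r) \<longleftrightarrow>
     (\<forall>j<m. D j \<in> carrier_mat (ddim l * ddim r) (ddim l * ddim r)
            \<and> diagonal_mat (D j) \<and> mtrace (D j * ctrans (D j)) = 1)
     \<and> dpu_circuit \<Omega> l \<and> dpu_circuit \<Omega> r"

text \<open>O_k(x_k), evaluated at a (total) assignment x.\<close>
fun oeval :: "'v dpu_circuit \<Rightarrow> (nat \<Rightarrow> 'v) \<Rightarrow> complex mat" where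
  "oeval (ALeaf k (d, \<Delta>)) x = \<Delta> (x k) * ctrans (\<Delta> (x k))"
| "oeval (ANode (m, D) l r) x =
     msum m m {..<m} (\<lambda>j. Jmat m (ddim l * ddim r) j * D j
                          * kron_mat (oeval l x) (oeval r x)
                          * ctrans (D j) * ctrans (Jmat m (ddim l * ddim r) j))"

end

theory Submission imports Defs begin

lemma mult_diag_right:
  assumes "A \<in> carrier_mat r n" "B \<in> carrier_mat n n" "diagonal_mat B" "i < r" "b < n"
  shows "(A * B) $$ (i, b) = A $$ (i, b) * B $$ (b, b)"
proof -
  have "(A * B) $$ (i, b) = (\<Sum>c\<in>{0..<n}. A $$ (i, c) * B $$ (c, b))"
    using assms by (simp add: scalar_prod_def)
  also have "\<dots> = (\<Sum>c\<in>{0..<n}. if c = b then A $$ (i, b) * B $$ (b, b) else 0)"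
    using assms by (intro sum.cong) (auto simp: diagonal_mat_def)
  also have "\<dots> = A $$ (i, b) * B $$ (b, b)" using assms by simp
  finally show ?thesis .
qed

lemma ctrans_carrier: "A \<in> carrier_mat r c \<Longrightarrow> ctrans A \<in> carrier_mat c r"
  by (simp add: ctrans_def)

lemma ctrans_index: "A \<in> carrier_mat r c \<Longrightarrow> i < c \<Longrightarrow> j < r \<Longrightarrow> ctrans A $$ (i, j) = cnj (A $$ (j, i))"
  by (simp add: ctrans_def)

lemma ctrans_diag: "A \<in> carrier_mat n n \<Longrightarrow> diagonal_mat A \<Longrightarrow> diagonal_mat (ctrans A)"
  by (simp add: ctrans_def diagonal_mat_def)

lemma Jprod:
  assumes D: "D \<in> carrier_mat n n" "diagonal_mat D" and K: "K \<in> carrier_mat n n" "diagonal_mat K"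
    and "i < m" "k < m"
  shows "(Jmat m n j * D * K * ctrans D * ctrans (Jmat m n j)) $$ (i, k)
     = (if i = j \<and> k = j then (\<Sum>b<n. D $$ (b, b) * K $$ (b, b) * cnj (D $$ (b, b))) else 0)"
proof -
  have J: "Jmat m n j \<in> carrier_mat m n" by (simp add: Jmat_def)
  define X where "X = Jmat m n j * D * K * ctrans D"
  have JD: "Jmat m n j * D \<in> carrier_mat m n" by (rule mult_carrier_mat[OF J D(1)])
  have JDK: "Jmat m n j * D * K \<in> carrier_mat m n" by (rule mult_carrier_mat[OF JD K(1)])
  have X: "X \<in> carrier_mat m n" unfolding X_def by (rule mult_carrier_mat[OF JDK ctrans_carrier[OF D(1)]])
  have Xe: "X $$ (i', b) = (if i' = j then D $$ (b, b) * K $$ (b, b) * cnj (D $$ (b, b)) else 0)"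
    if "i' < m" "b < n" for i' b
  proof -
    have "X $$ (i', b) = (Jmat m n j * D * K) $$ (i', b) * ctrans D $$ (b, b)"
      unfolding X_def
      by (rule mult_diag_right[OF JDK ctrans_carrier[OF D(1)] ctrans_diag[OF D] that])
    also have "(Jmat m n j * D * K) $$ (i', b) = (Jmat m n j * D) $$ (i', b) * K $$ (b, b)"
      by (rule mult_diag_right[OF JD K that])
    also have "(Jmat m n j * D) $$ (i', b) = Jmat m n j $$ (i', b) * D $$ (b, b)"
      by (rule mult_diag_right[OF J D that])
    finally show ?thesis using that D(1) by (simp add: Jmat_def ctrans_index[OF D(1)])
  qed
  have "(X * ctrans (Jmat m n j)) $$ (i, k) = (\<Sum>b\<in>{0..<n}. X $$ (i, b) * cnj (Jmat m n j $$ (k, b)))"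
    using assms X J by (simp add: scalar_prod_def ctrans_def)
  also have "\<dots> = (\<Sum>b\<in>{0..<n}. if i = j \<and> k = j then D $$ (b, b) * K $$ (b, b) * cnj (D $$ (b, b)) else 0)"
    using assms by (intro sum.cong) (auto simp: Xe Jmat_def)
  also have "\<dots> = (if i = j \<and> k = j then (\<Sum>b<n. D $$ (b, b) * K $$ (b, b) * cnj (D $$ (b, b))) else 0)"
    by (auto simp: atLeast0LessThan)
  finally show ?thesis by (simp only: X_def)
qed

lemma zcnj: "z * cnj z = complex_of_real ((cmod z)\<^sup>2)"
  by (metis complex_norm_square)

lemma kron_carrier: "A \<in> carrier_mat a a \<Longrightarrow> B \<in> carrier_mat b b \<Longrightarrow> kron_mat A B \<in> carrier_mat (a*b) (a*b)"
  by (simp add: kron_mat_def)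

lemma kron_index: "A \<in> carrier_mat a a \<Longrightarrow> B \<in> carrier_mat b b \<Longrightarrow> i < a*b \<Longrightarrow> j < a*b \<Longrightarrow>
   kron_mat A B $$ (i, j) = A $$ (i div b, j div b) * B $$ (i mod b, j mod b)"
  by (simp add: kron_mat_def)

lemma kron_diag:
  fixes A B :: "complex mat"
  assumes "A \<in> carrier_mat a a" "B \<in> carrier_mat b b" "diagonal_mat A" "diagonal_mat B"
  shows "diagonal_mat (kron_mat A B)"
  unfolding diagonal_mat_def
proof (intro allI impI)
  fix i j assume ij: "i < dim_row (kron_mat A B)" "j < dim_col (kron_mat A B)" "i \<noteq> j"
  hence ij': "i < a*b" "j < a*b" using assms by (auto simp: kron_mat_def)
  hence b: "b > 0" by (cases b) auto
  have lt: "i div b < a" "j div b < a" "i mod b < b" "j mod b < b"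
    using ij' b by (auto simp: less_mult_imp_div_less mult.commute)
  have "i div b \<noteq> j div b \<or> i mod b \<noteq> j mod b"
    using ij(3) by (metis div_mult_mod_eq)
  thus "kron_mat A B $$ (i, j) = 0"
    using kron_index[OF assms(1,2) ij'] assms lt by (auto simp: diagonal_mat_def)
qed

lemma kron_vec_carrier: "u \<in> carrier_vec a \<Longrightarrow> v \<in> carrier_vec b \<Longrightarrow> kron_vec u v \<in> carrier_vec (a*b)"
  by (simp add: kron_vec_def)

lemma kron_vec_index: "u \<in> carrier_vec a \<Longrightarrow> v \<in> carrier_vec b \<Longrightarrow> i < a*b \<Longrightarrow>
   kron_vec u v $ i = u $ (i div b) * v $ (i mod b)"
  by (simp add: kron_vec_def)

fun conv1 :: "'v dpu_circuit \<Rightarrow> 'v prob_circuit" where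
  "conv1 (ALeaf k (d, \<Delta>)) = ALeaf k (d, \<lambda>x. vec d (\<lambda>i. (cmod (\<Delta> x $$ (i, i)))\<^sup>2))"
| "conv1 (ANode (m, D) l r) = ANode (mat m (ddim l * ddim r) (\<lambda>(j, a). (cmod (D j $$ (a, a)))\<^sup>2))
      (conv1 l) (conv1 r)"

fun conv2 :: "'v prob_circuit \<Rightarrow> 'v dpu_circuit" where
  "conv2 (ALeaf k (d, P)) = ALeaf k (d, \<lambda>x. mat d d (\<lambda>(i, j). if i = j then complex_of_real (sqrt (P x $ i)) else 0))"
| "conv2 (ANode W l r) = ANode (dim_row W, \<lambda>j. mat (pdim l * pdim r) (pdim l * pdim r)
      (\<lambda>(a, b). if a = b then complex_of_real (sqrt (W $$ (j, a))) else 0)) (conv2 l) (conv2 r)"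

lemma shape_conv1: "shape (conv1 C) = shape C"
  by (induction C rule: conv1.induct) auto

lemma shape_conv2: "shape (conv2 Q) = shape Q"
  by (induction Q rule: conv2.induct) auto

lemma pdim_conv1: "pdim (conv1 C) = ddim C"
  by (induction C rule: conv1.induct) auto

lemma ddim_conv2: "ddim (conv2 Q) = pdim Q"
  by (induction Q rule: conv2.induct) auto

lemma sub_conv1: "sub_at (conv1 C) p = conv1 (sub_at C p)"
proof (induction C arbitrary: p rule: conv1.induct)
  case (1 k d \<Delta>) then show ?case by (cases p) auto
next
  case (2 m D l r) then show ?case by (cases p; cases "hd p") auto
qed

lemma sub_conv2: "sub_at (conv2 C) p = conv2 (sub_at C p)"
proof (induction C arbitrary: p rule: conv2.induct)
  case (1 k d \<Delta>) then show ?case by (cases p) auto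
next
  case (2 W l r) then show ?case by (cases p; cases "hd p") auto
qed

lemma sub_dpu: "dpu_circuit \<Omega> C \<Longrightarrow> dpu_circuit \<Omega> (sub_at C p)"
proof (induction C arbitrary: p rule: conv1.induct)
  case (1 k d \<Delta>) then show ?case by (cases p) auto
next
  case (2 m D l r) then show ?case by (cases p; cases "hd p") auto
qed

lemma sub_prob: "prob_circuit \<Omega> C \<Longrightarrow> prob_circuit \<Omega> (sub_at C p)"
proof (induction C arbitrary: p rule: conv2.induct)
  case (1 k d \<Delta>) then show ?case by (cases p) auto
next
  case (2 W l r) then show ?case by (cases p; cases "hd p") auto
qed


lemma main1:
  "dpu_circuit \<Omega> C \<Longrightarrow> (\<forall>i\<in>avars C. x i \<in> \<Omega> i) \<Longrightarrow>
    oeval C x \<in> carrier_mat (ddim C) (ddim C) \<and> diagonal_mat (oeval C x)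
    \<and> peval (conv1 C) x \<in> carrier_vec (ddim C)
    \<and> (\<forall>i<ddim C. oeval C x $$ (i, i) = complex_of_real (peval (conv1 C) x $ i))"
proof (induction C rule: conv1.induct)
  case (1 k d \<Delta>)
  have xk: "x k \<in> \<Omega> k" using 1 by simp
  hence D: "\<Delta> (x k) \<in> carrier_mat d d" "diagonal_mat (\<Delta> (x k))" using 1 by auto
  have e: "(\<Delta> (x k) * ctrans (\<Delta> (x k))) $$ (i, j) = \<Delta> (x k) $$ (i, j) * cnj (\<Delta> (x k) $$ (j, j))"
    if "i < d" "j < d" for i j
    using mult_diag_right[OF D(1) ctrans_carrier[OF D(1)] ctrans_diag[OF D] that] that
    by (simp add: ctrans_index[OF D(1)])
  have c: "\<Delta> (x k) * ctrans (\<Delta> (x k)) \<in> carrier_mat d d"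
    using D(1) ctrans_carrier[OF D(1)] by (metis mult_carrier_mat)
  show ?case
    using c D e by (auto simp: diagonal_mat_def zcnj)
next
  case (2 m D l r)
  define n where "n = ddim l * ddim r"
  have Dj: "D j \<in> carrier_mat n n" "diagonal_mat (D j)" if "j < m" for j
    using 2(3) that by (auto simp: n_def)
  have xl: "\<forall>i\<in>avars l. x i \<in> \<Omega> i" and xr: "\<forall>i\<in>avars r. x i \<in> \<Omega> i" using 2(4) by auto
  note IHl = 2(1)[OF _ xl] and IHr = 2(2)[OF _ xr]
  have IHl: "oeval l x \<in> carrier_mat (ddim l) (ddim l)" "diagonal_mat (oeval l x)"
    "peval (conv1 l) x \<in> carrier_vec (ddim l)"
    "\<And>i. i < ddim l \<Longrightarrow> oeval l x $$ (i, i) = complex_of_real (peval (conv1 l) x $ i)"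
    using IHl 2(3) by auto
  have IHr: "oeval r x \<in> carrier_mat (ddim r) (ddim r)" "diagonal_mat (oeval r x)"
    "peval (conv1 r) x \<in> carrier_vec (ddim r)"
    "\<And>i. i < ddim r \<Longrightarrow> oeval r x $$ (i, i) = complex_of_real (peval (conv1 r) x $ i)"
    using IHr 2(3) by auto
  define K where "K = kron_mat (oeval l x) (oeval r x)"
  have K: "K \<in> carrier_mat n n" "diagonal_mat K"
    unfolding K_def n_def using kron_carrier[OF IHl(1) IHr(1)] kron_diag[OF IHl(1) IHr(1) IHl(2) IHr(2)]
    by auto
  define kv where "kv = kron_vec (peval (conv1 l) x) (peval (conv1 r) x)"
  have kv: "kv \<in> carrier_vec n" unfolding kv_def n_def using kron_vec_carrier[OF IHl(3) IHr(3)] .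
  have Kkv: "K $$ (b, b) = complex_of_real (kv $ b)" if "b < n" for b
  proof -
    have b: "b < ddim l * ddim r" using that n_def by simp
    hence "ddim r > 0" by (cases "ddim r") auto
    hence lt: "b div ddim r < ddim l" "b mod ddim r < ddim r"
      using b by (auto simp: less_mult_imp_div_less mult.commute)
    show ?thesis unfolding K_def kv_def
      using kron_index[OF IHl(1) IHr(1) b b] kron_vec_index[OF IHl(3) IHr(3) b] IHl(4)[OF lt(1)] IHr(4)[OF lt(2)]
      by simp
  qed
  define M where "M = (\<lambda>j. Jmat m n j * D j * K * ctrans (D j) * ctrans (Jmat m n j))"
  have oe: "oeval (ANode (m, D) l r) x = msum m m {..<m} M"
    by (simp add: M_def K_def n_def)
  define s where "s = (\<lambda>j. \<Sum>b<n. D j $$ (b, b) * K $$ (b, b) * cnj (D j $$ (b, b)))"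
  have Mij: "M j $$ (i, k) = (if i = j \<and> k = j then s j else 0)" if "j < m" "i < m" "k < m" for i j k
    unfolding M_def s_def using Jprod[OF Dj[OF that(1)] K that(2,3)] .
  have oeik: "oeval (ANode (m, D) l r) x $$ (i, k) = (if i = k then s i else 0)" if "i < m" "k < m" for i k
  proof -
    have "oeval (ANode (m, D) l r) x $$ (i, k) = (\<Sum>j<m. M j $$ (i, k))"
      unfolding oe using that by (simp add: msum_def)
    also have "\<dots> = (\<Sum>j<m. if j = i then (if i = k then s i else 0) else 0)"
      using that by (intro sum.cong) (auto simp: Mij)
    also have "\<dots> = (if i = k then s i else 0)" using that by simp
    finally show ?thesis .
  qed
  define W where "W = mat m n (\<lambda>(j, a). (cmod (D j $$ (a, a)))\<^sup>2)"
  have pe: "peval (conv1 (ANode (m, D) l r)) x = W *\<^sub>v kv"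
    by (simp add: W_def kv_def n_def)
  have si: "s i = complex_of_real ((W *\<^sub>v kv) $ i)" if "i < m" for i
  proof -
    have "(W *\<^sub>v kv) $ i = (\<Sum>a\<in>{0..<n}. (cmod (D i $$ (a, a)))\<^sup>2 * kv $ a)"
      using that kv by (simp add: W_def scalar_prod_def)
    hence "complex_of_real ((W *\<^sub>v kv) $ i) = (\<Sum>a\<in>{0..<n}. complex_of_real ((cmod (D i $$ (a, a)))\<^sup>2) * K $$ (a, a))"
      by (simp add: Kkv)
    also have "\<dots> = s i" unfolding s_def
      by (intro sum.cong) (simp_all only: zcnj[symmetric] atLeast0LessThan mult_ac)
    finally show ?thesis by simp
  qed
  have c: "oeval (ANode (m, D) l r) x \<in> carrier_mat m m" unfolding oe by (simp add: msum_def)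
  have "dim_row W = m" unfolding W_def by simp
  hence wc: "W *\<^sub>v kv \<in> carrier_vec m" unfolding carrier_vec_def by simp
  have dg: "diagonal_mat (oeval (ANode (m, D) l r) x)"
    using c oeik unfolding diagonal_mat_def by (auto simp del: oeval.simps)
  have ent: "\<forall>i<m. oeval (ANode (m, D) l r) x $$ (i, i) = complex_of_real ((W *\<^sub>v kv) $ i)"
    using oeik si by (simp del: oeval.simps)
  show ?case
    using c dg wc ent pe by (simp del: oeval.simps peval.simps conv1.simps)
qed

lemma diag_self_entry:
  assumes "A \<in> carrier_mat d d" "diagonal_mat A" "i < d"
  shows "(A * ctrans A) $$ (i, i) = complex_of_real ((cmod (A $$ (i, i)))\<^sup>2)"
  using mult_diag_right[OF assms(1) ctrans_carrier[OF assms(1)] ctrans_diag[OF assms(1,2)] assms(3) assms(3)] assms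
  by (simp add: ctrans_index zcnj)

lemma prob_conv1: "dpu_circuit \<Omega> C \<Longrightarrow> prob_circuit \<Omega> (conv1 C)"
proof (induction C rule: conv1.induct)
  case (1 k d \<Delta>)
  have "vsum d (\<Omega> k) (\<lambda>x. vec d (\<lambda>i. (cmod (\<Delta> x $$ (i, i)))\<^sup>2)) = vec d (\<lambda>i. 1)"
  proof (rule eq_vecI)
    fix i assume i: "i < dim_vec (vec d (\<lambda>i. 1::real))"
    hence i': "i < d" by simp
    have "complex_of_real (\<Sum>x\<in>\<Omega> k. (cmod (\<Delta> x $$ (i, i)))\<^sup>2)
        = (\<Sum>x\<in>\<Omega> k. (\<Delta> x * ctrans (\<Delta> x)) $$ (i, i))"
      unfolding of_real_sum using 1 i' by (intro sum.cong) (auto simp: diag_self_entry)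
    also have "\<dots> = msum d d (\<Omega> k) (\<lambda>x. \<Delta> x * ctrans (\<Delta> x)) $$ (i, i)"
      using i' by (simp add: msum_def)
    also have "\<dots> = 1" using 1 i' by simp
    finally have "(\<Sum>x\<in>\<Omega> k. (cmod (\<Delta> x $$ (i, i)))\<^sup>2) = 1"
      by (metis of_real_eq_1_iff)
    thus "vsum d (\<Omega> k) (\<lambda>x. vec d (\<lambda>i. (cmod (\<Delta> x $$ (i, i)))\<^sup>2)) $ i = vec d (\<lambda>i. 1) $ i"
      using i' by (simp add: vsum_def)
  qed (simp add: vsum_def)
  then show ?case by simp
next
  case (2 m D l r)
  have rs: "(\<Sum>a<ddim l * ddim r. (cmod (D j $$ (a, a)))\<^sup>2) = 1" if j: "j < m" for j
  proof -
    have Dj: "D j \<in> carrier_mat (ddim l * ddim r) (ddim l * ddim r)" "diagonal_mat (D j)"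
      "mtrace (D j * ctrans (D j)) = 1" using 2(3) j by auto
    have "complex_of_real (\<Sum>a<ddim l * ddim r. (cmod (D j $$ (a, a)))\<^sup>2)
        = (\<Sum>a<ddim l * ddim r. (D j * ctrans (D j)) $$ (a, a))"
      unfolding of_real_sum using Dj by (intro sum.cong) (auto simp: diag_self_entry)
    also have "\<dots> = 1" using Dj(1,3) by (simp add: mtrace_def)
    finally show ?thesis by (metis of_real_eq_1_iff)
  qed
  show ?case using 2 rs by (auto simp: pdim_conv1)
qed

lemma dpu_conv2: "prob_circuit \<Omega> Q \<Longrightarrow> dpu_circuit \<Omega> (conv2 Q)"
proof (induction Q rule: conv2.induct)
  case (1 k d P)
  have pc: "\<forall>x\<in>\<Omega> k. P x \<in> carrier_vec d \<and> (\<forall>i<d. P x $ i \<ge> 0)"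
    using 1 by (simp only: prob_circuit.simps) blast
  have vs: "vsum d (\<Omega> k) P = vec d (\<lambda>i. 1)"
    using 1 by (simp only: prob_circuit.simps)
  define \<Delta> where "\<Delta> = (\<lambda>x. mat d d (\<lambda>(i, j). if i = j then complex_of_real (sqrt (P x $ i)) else 0))"
  have car: "\<Delta> x \<in> carrier_mat d d" "diagonal_mat (\<Delta> x)" for x
    by (auto simp: \<Delta>_def diagonal_mat_def)
  have ms: "msum d d (\<Omega> k) (\<lambda>x. \<Delta> x * ctrans (\<Delta> x)) = 1\<^sub>m d"
  proof (rule eq_matI)
    fix i j assume ij: "i < dim_row (1\<^sub>m d :: complex mat)" "j < dim_col (1\<^sub>m d :: complex mat)"
    hence ij': "i < d" "j < d" by auto
    have e: "(\<Delta> x * ctrans (\<Delta> x)) $$ (i, j) = (if i = j then complex_of_real (P x $ i) else 0)"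
      if "x \<in> \<Omega> k" for x
    proof (cases "i = j")
      case True
      have p: "P x $ i \<ge> 0" using pc that ij' by blast
      have d: "\<Delta> x $$ (i, i) = complex_of_real (sqrt (P x $ i))" using ij' by (simp add: \<Delta>_def)
      have "(\<Delta> x * ctrans (\<Delta> x)) $$ (i, i) = complex_of_real ((cmod (\<Delta> x $$ (i, i)))\<^sup>2)"
        by (rule diag_self_entry[OF car ij'(1)])
      also have "\<dots> = complex_of_real (P x $ i)" unfolding d using p by simp
      finally show ?thesis using True by simp
    next
      case False
      have "(\<Delta> x * ctrans (\<Delta> x)) $$ (i, j) = \<Delta> x $$ (i, j) * ctrans (\<Delta> x) $$ (j, j)"
        by (rule mult_diag_right[OF car(1) ctrans_carrier[OF car(1)] ctrans_diag[OF car] ij'])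
      also have "\<Delta> x $$ (i, j) = 0" using ij' False by (simp add: \<Delta>_def)
      finally show ?thesis using False by simp
    qed
    have "msum d d (\<Omega> k) (\<lambda>x. \<Delta> x * ctrans (\<Delta> x)) $$ (i, j)
       = (\<Sum>x\<in>\<Omega> k. (\<Delta> x * ctrans (\<Delta> x)) $$ (i, j))" using ij' by (simp add: msum_def)
    also have "\<dots> = (\<Sum>x\<in>\<Omega> k. if i = j then complex_of_real (P x $ i) else 0)"
      by (intro sum.cong refl) (simp add: e)
    also have "\<dots> = (if i = j then complex_of_real (\<Sum>x\<in>\<Omega> k. P x $ i) else 0)"
      by simp
    also have "(\<Sum>x\<in>\<Omega> k. P x $ i) = vsum d (\<Omega> k) P $ i" using ij' by (simp add: vsum_def)
    also have "\<dots> = 1" using vs ij' by simp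
    finally show "msum d d (\<Omega> k) (\<lambda>x. \<Delta> x * ctrans (\<Delta> x)) $$ (i, j) = 1\<^sub>m d $$ (i, j)"
      using ij' by simp
  qed (simp_all add: msum_def)
  have eq: "conv2 (ALeaf k (d, P)) = ALeaf k (d, \<Delta>)" by (simp add: \<Delta>_def)
  show ?case unfolding eq dpu_circuit.simps using car ms by blast
next
  case (2 W l r)
  define n where "n = pdim l * pdim r"
  define D where "D = (\<lambda>j. mat n n (\<lambda>(a, b). if a = b then complex_of_real (sqrt (W $$ (j, a))) else 0))"
  have car: "D j \<in> carrier_mat n n" "diagonal_mat (D j)" for j
    by (auto simp: D_def diagonal_mat_def)
  have pw: "W \<in> carrier_mat (dim_row W) n" "\<forall>i<dim_row W. \<forall>j<dim_col W. W $$ (i, j) \<ge> 0"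
     "\<forall>i<dim_row W. (\<Sum>j<dim_col W. W $$ (i, j)) = 1" "prob_circuit \<Omega> l" "prob_circuit \<Omega> r"
    using 2(3) unfolding n_def prob_circuit.simps by blast+
  have dc: "dim_col W = n" using pw(1) by (rule carrier_matD(2))
  have tr: "mtrace (D j * ctrans (D j)) = 1" if j: "j < dim_row W" for j
  proof -
    have "mtrace (D j * ctrans (D j)) = (\<Sum>a<n. (D j * ctrans (D j)) $$ (a, a))"
      using car(1)[of j] by (simp add: mtrace_def)
    also have "\<dots> = (\<Sum>a<n. complex_of_real (W $$ (j, a)))"
    proof (intro sum.cong refl)
      fix a assume a: "a \<in> {..<n}"
      have w: "W $$ (j, a) \<ge> 0" using pw(2) j a dc by auto
      have d: "D j $$ (a, a) = complex_of_real (sqrt (W $$ (j, a)))" using a by (simp add: D_def)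
      have a': "a < n" using a by simp
      have "(D j * ctrans (D j)) $$ (a, a) = complex_of_real ((cmod (D j $$ (a, a)))\<^sup>2)"
        by (rule diag_self_entry[OF car a'])
      also have "\<dots> = complex_of_real (W $$ (j, a))" unfolding d using w by simp
      finally show "(D j * ctrans (D j)) $$ (a, a) = complex_of_real (W $$ (j, a))" .
    qed
    also have "\<dots> = complex_of_real (\<Sum>a<n. W $$ (j, a))" by simp
    also have "(\<Sum>a<n. W $$ (j, a)) = 1" using pw(3) j dc by auto
    finally show ?thesis by simp
  qed
  have eq: "conv2 (ANode W l r) = ANode (dim_row W, D) (conv2 l) (conv2 r)"
    by (simp add: D_def n_def)
  have il: "dpu_circuit \<Omega> (conv2 l)" by (rule 2(1)[OF pw(4)])
  have ir: "dpu_circuit \<Omega> (conv2 r)" by (rule 2(2)[OF pw(5)])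
  show ?case unfolding eq dpu_circuit.simps ddim_conv2 n_def[symmetric] using car tr il ir by blast
qed

lemma peval_conv12: "prob_circuit \<Omega> Q \<Longrightarrow> (\<forall>i\<in>avars Q. x i \<in> \<Omega> i) \<Longrightarrow>
   peval (conv1 (conv2 Q)) x = peval Q x"
proof (induction Q rule: conv2.induct)
  case (1 k d P)
  have xk: "x k \<in> \<Omega> k" using 1(2) by simp
  have pc: "\<forall>x\<in>\<Omega> k. P x \<in> carrier_vec d \<and> (\<forall>i<d. P x $ i \<ge> 0)"
    using 1(1) by (simp only: prob_circuit.simps) blast
  have P: "P (x k) \<in> carrier_vec d" "\<And>i. i < d \<Longrightarrow> P (x k) $ i \<ge> 0" using pc xk by auto
  have "peval (conv1 (conv2 (ALeaf k (d, P)))) x = vec d (\<lambda>i. (cmod (mat d d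
      (\<lambda>(i, j). if i = j then complex_of_real (sqrt (P (x k) $ i)) else 0) $$ (i, i)))\<^sup>2)"
    by simp
  also have "\<dots> = P (x k)"
  proof (rule eq_vecI)
    show "dim_vec (vec d (\<lambda>i. (cmod (mat d d
      (\<lambda>(i, j). if i = j then complex_of_real (sqrt (P (x k) $ i)) else 0) $$ (i, i)))\<^sup>2)) = dim_vec (P (x k))"
      using P(1) by simp
    fix i assume "i < dim_vec (P (x k))"
    hence i: "i < d" using P(1) by simp
    show "vec d (\<lambda>i. (cmod (mat d d
      (\<lambda>(i, j). if i = j then complex_of_real (sqrt (P (x k) $ i)) else 0) $$ (i, i)))\<^sup>2) $ i = P (x k) $ i"
      using i P(2)[OF i] by simp
  qed
  finally show ?case by simp
next
  case (2 W l r)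
  have W: "W \<in> carrier_mat (dim_row W) (pdim l * pdim r)"
    "\<And>i j. i < dim_row W \<Longrightarrow> j < dim_col W \<Longrightarrow> W $$ (i, j) \<ge> 0"
    using 2(3) by auto
  have dc: "dim_col W = pdim l * pdim r" using W(1) by (rule carrier_matD(2))
  have Weq: "mat (dim_row W) (pdim l * pdim r) (\<lambda>(j, a). (cmod (mat (pdim l * pdim r) (pdim l * pdim r)
      (\<lambda>(a, b). if a = b then complex_of_real (sqrt (W $$ (j, a))) else 0) $$ (a, a)))\<^sup>2) = W"
  proof (rule eq_matI)
    fix i j assume ij: "i < dim_row W" "j < dim_col W"
    hence j: "j < pdim l * pdim r" using dc by simp
    have "W $$ (i, j) \<ge> 0" using W(2) ij by blast
    thus "mat (dim_row W) (pdim l * pdim r) (\<lambda>(j, a). (cmod (mat (pdim l * pdim r) (pdim l * pdim r)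
      (\<lambda>(a, b). if a = b then complex_of_real (sqrt (W $$ (j, a))) else 0) $$ (a, a)))\<^sup>2) $$ (i, j) = W $$ (i, j)"
      using ij j by simp
  qed (simp_all add: dc)
  have c: "conv1 (conv2 (ANode W l r)) = ANode W (conv1 (conv2 l)) (conv1 (conv2 r))"
    using Weq by (simp add: ddim_conv2)
  have pl: "prob_circuit \<Omega> l" "prob_circuit \<Omega> r" using 2(3) by auto
  have xl: "\<forall>i\<in>avars l. x i \<in> \<Omega> i" "\<forall>i\<in>avars r. x i \<in> \<Omega> i" using 2(4) by auto
  have il: "peval (conv1 (conv2 l)) x = peval l x" by (rule 2(1)[OF pl(1) xl(1)])
  have ir: "peval (conv1 (conv2 r)) x = peval r x" by (rule 2(2)[OF pl(2) xl(2)])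
  show ?case unfolding c by (simp only: peval.simps il ir)
qed

theorem proposition10:
  fixes N :: nat and T :: ptree and \<Omega> :: "nat \<Rightarrow> 'v set"
  assumes "partition_circuit N T"
    and "\<forall>k<N. finite (\<Omega> k)"
  shows "(\<forall>C :: 'v dpu_circuit. shape C = T \<and> dpu_circuit \<Omega> C \<longrightarrow>
            (\<exists>Q :: 'v prob_circuit. shape Q = T \<and> prob_circuit \<Omega> Q \<and>
               (\<forall>p\<in>units T. \<forall>x. (\<forall>i\<in>avars (sub_at C p). x i \<in> \<Omega> i) \<longrightarrow>
                  map_vec complex_of_real (peval (sub_at Q p) x) = diagvec (oeval (sub_at C p) x))))
       \<and> (\<forall>Q :: 'v prob_circuit. shape Q = T \<and> prob_circuit \<Omega> Q \<longrightarrow>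
            (\<exists>C :: 'v dpu_circuit. shape C = T \<and> dpu_circuit \<Omega> C \<and>
               (\<forall>p\<in>units T. \<forall>x. (\<forall>i\<in>avars (sub_at Q p). x i \<in> \<Omega> i) \<longrightarrow>
                  diagvec (oeval (sub_at C p) x) = map_vec complex_of_real (peval (sub_at Q p) x))))"
proof -
  have key: "diagvec (oeval C x) = map_vec complex_of_real (peval (conv1 C) x)"
    if "dpu_circuit \<Omega> C" "\<forall>i\<in>avars C. x i \<in> \<Omega> i" for C :: "'v dpu_circuit" and x
  proof -
    have M: "oeval C x \<in> carrier_mat (ddim C) (ddim C)" "peval (conv1 C) x \<in> carrier_vec (ddim C)"
      "\<forall>i<ddim C. oeval C x $$ (i, i) = complex_of_real (peval (conv1 C) x $ i)"
      using main1[OF that] by blast+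
    have d1: "dim_row (oeval C x) = ddim C" using M(1) by (rule carrier_matD(1))
    have d2: "dim_vec (peval (conv1 C) x) = ddim C" using M(2) by (rule carrier_vecD)
    show ?thesis
    proof (rule eq_vecI)
      show "dim_vec (diagvec (oeval C x)) = dim_vec (map_vec complex_of_real (peval (conv1 C) x))"
        unfolding diagvec_def using d1 d2 by simp
    next
      fix i assume "i < dim_vec (map_vec complex_of_real (peval (conv1 C) x))"
      hence i: "i < ddim C" using d2 by simp
      have "diagvec (oeval C x) $ i = oeval C x $$ (i, i)" unfolding diagvec_def using i d1 by simp
      also have "\<dots> = complex_of_real (peval (conv1 C) x $ i)" using M(3) i by blast
      also have "\<dots> = map_vec complex_of_real (peval (conv1 C) x) $ i" using i d2 by simp
      finally show "diagvec (oeval C x) $ i = map_vec complex_of_real (peval (conv1 C) x) $ i" .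
    qed
  qed
  show ?thesis
  proof (intro conjI allI impI)
    fix C :: "'v dpu_circuit" assume C: "shape C = T \<and> dpu_circuit \<Omega> C"
    show "\<exists>Q :: 'v prob_circuit. shape Q = T \<and> prob_circuit \<Omega> Q \<and>
               (\<forall>p\<in>units T. \<forall>x. (\<forall>i\<in>avars (sub_at C p). x i \<in> \<Omega> i) \<longrightarrow>
                  map_vec complex_of_real (peval (sub_at Q p) x) = diagvec (oeval (sub_at C p) x))"
    proof (intro exI[of _ "conv1 C"] conjI ballI allI impI)
      show "shape (conv1 C) = T" using C shape_conv1 by metis
      show "prob_circuit \<Omega> (conv1 C)" using C prob_conv1 by blast
      fix p x assume x: "\<forall>i\<in>avars (sub_at C p). x i \<in> \<Omega> i"
      have dc: "dpu_circuit \<Omega> (sub_at C p)" using C sub_dpu by blast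
      show "map_vec complex_of_real (peval (sub_at (conv1 C) p) x) = diagvec (oeval (sub_at C p) x)"
        unfolding sub_conv1 by (rule key[OF dc x, symmetric])
    qed
  next
    fix Q :: "'v prob_circuit" assume Q: "shape Q = T \<and> prob_circuit \<Omega> Q"
    show "\<exists>C :: 'v dpu_circuit. shape C = T \<and> dpu_circuit \<Omega> C \<and>
               (\<forall>p\<in>units T. \<forall>x. (\<forall>i\<in>avars (sub_at Q p). x i \<in> \<Omega> i) \<longrightarrow>
                  diagvec (oeval (sub_at C p) x) = map_vec complex_of_real (peval (sub_at Q p) x))"
    proof (intro exI[of _ "conv2 Q"] conjI ballI allI impI)
      show "shape (conv2 Q) = T" using Q shape_conv2 by metis
      show "dpu_circuit \<Omega> (conv2 Q)" using Q dpu_conv2 by blast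
      fix p x assume x: "\<forall>i\<in>avars (sub_at Q p). x i \<in> \<Omega> i"
      have pq: "prob_circuit \<Omega> (sub_at Q p)" using Q sub_prob by blast
      have x': "\<forall>i\<in>avars (conv2 (sub_at Q p)). x i \<in> \<Omega> i" using x by (simp only: shape_conv2)
      show "diagvec (oeval (sub_at (conv2 Q) p) x) = map_vec complex_of_real (peval (sub_at Q p) x)"
        unfolding sub_conv2 key[OF dpu_conv2[OF pq] x'] peval_conv12[OF pq x] ..
    qed
  qed
qed

end
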